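(* Let $r\ge1$ be an integer, $\beta\in(0,1)$, and let $\psi$ be a measurable function on $\mathbb{R}$ for which all convolutions and integrals in the definition of $\mathcal{R}_{\beta'}[\psi]$ converge absolutely for every $\beta'\in(0,1)$ (e.g. $\psi\in\mathcal{E}_D$ with $z_1,z_2$ as in Proposition 4.1). If $\mathcal{R}_\beta[\psi]=\psi$, then $\mathcal{R}_{\beta^n}[\psi]=\psi$ for every $n\in\mathbb{N}$.
   Context: Convolution: $(f\bullet g)(y)=\int_{\mathbb{R}}f(x)g(y-x)\,dx$; $(\psi\circ(-))(x)=\psi(-x)$; $\bar\psi$ is the complex conjugate; $h^{\bullet r}$ is the $r$-fold convolution. For $\beta\in(0,1)$, $$\mathcal{R}_\beta[\psi](\eta)=\frac{e^{i(1-\beta^{-2})\eta^2}}{\beta^{\frac{r-1}{r}}}\psi\!\left(\frac{\eta}{\beta}\right)+\operatorname{sign}(\eta)\frac{2ie^{i\eta^2}}{|\eta|^{\frac{r-1}{r}}}\int_{\eta}^{\eta/\beta}e^{-i\zeta^2}\frac{\big(\psi\bullet(\psi\bullet\overline{\psi\circ(-)})^{\bullet r}\big)(\zeta)}{|\zeta|^{1/r}}\,d\zeta .$$ $\mathcal{E}_D=\{f\text{ measurable}: |f(x)|\le D|x|^{z_1}e^{-|x|}\ (|x|\le1),\ |f(x)|\le D|x|^{z_2}e^{-|x|}\ (|x|>1)\}$ with $-1<z_1<-\frac{2r}{2r+1}$, $z_2<-1$. *)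

theory Defs
  imports "HOL-Analysis.Analysis"
begin

definition conv :: "(real \<Rightarrow> complex) \<Rightarrow> (real \<Rightarrow> complex) \<Rightarrow> real \<Rightarrow> complex" where
  "conv f g y = integral\<^sup>L lborel (\<lambda>x. f x * g (y - x))"

definition conv_abs_conv :: "(real \<Rightarrow> complex) \<Rightarrow> (real \<Rightarrow> complex) \<Rightarrow> bool" where
  "conv_abs_conv f g \<longleftrightarrow> (AE y in lborel. integrable lborel (\<lambda>x. f x * g (y - x)))"

text \<open>r-fold convolution h^{\<bullet> r} (r \<ge> 1); the value for r = 0 is irrelevant.\<close>
fun conv_pow :: "(real \<Rightarrow> complex) \<Rightarrow> nat \<Rightarrow> real \<Rightarrow> complex" where
  "conv_pow h 0 = (\<lambda>_. 0)"
| "conv_pow h (Suc 0) = h"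
| "conv_pow h (Suc (Suc n)) = conv h (conv_pow h (Suc n))"

definition psi_tilde :: "(real \<Rightarrow> complex) \<Rightarrow> real \<Rightarrow> complex" where
  "psi_tilde \<psi> = conv \<psi> (\<lambda>x. cnj (\<psi> (- x)))"

definition Phi :: "nat \<Rightarrow> (real \<Rightarrow> complex) \<Rightarrow> real \<Rightarrow> complex" where
  "Phi r \<psi> = conv \<psi> (conv_pow (psi_tilde \<psi>) r)"

definition R_integrand :: "nat \<Rightarrow> (real \<Rightarrow> complex) \<Rightarrow> real \<Rightarrow> complex" where
  "R_integrand r \<psi> \<zeta> = exp (- \<i> * complex_of_real (\<zeta>\<^sup>2)) * Phi r \<psi> \<zeta>
       / complex_of_real (\<bar>\<zeta>\<bar> powr (1 / real r))"

text \<open>The operator R_\<beta>; the oriented integral \<integral>_\<eta>^{\<eta>/\<beta>} is the interval Lebesgue integral.\<close>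
definition R_op :: "nat \<Rightarrow> real \<Rightarrow> (real \<Rightarrow> complex) \<Rightarrow> real \<Rightarrow> complex" where
  "R_op r \<beta> \<psi> \<eta> =
     exp (\<i> * complex_of_real ((1 - 1 / \<beta>\<^sup>2) * \<eta>\<^sup>2))
       / complex_of_real (\<beta> powr ((real r - 1) / real r)) * \<psi> (\<eta> / \<beta>)
   + complex_of_real (sgn \<eta>) * (2 * \<i> * exp (\<i> * complex_of_real (\<eta>\<^sup>2)))
       / complex_of_real (\<bar>\<eta>\<bar> powr ((real r - 1) / real r))
       * interval_lebesgue_integral lborel (ereal \<eta>) (ereal (\<eta> / \<beta>)) (R_integrand r \<psi>)"

definition R_abs_conv :: "nat \<Rightarrow> (real \<Rightarrow> complex) \<Rightarrow> bool" where
  "R_abs_conv r \<psi> \<longleftrightarrow>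
     conv_abs_conv \<psi> (\<lambda>x. cnj (\<psi> (- x)))
   \<and> (\<forall>k. 1 \<le> k \<and> k < r \<longrightarrow> conv_abs_conv (psi_tilde \<psi>) (conv_pow (psi_tilde \<psi>) k))
   \<and> conv_abs_conv \<psi> (conv_pow (psi_tilde \<psi>) r)
   \<and> (\<forall>\<beta>'\<in>{0<..<1}. \<forall>\<eta>. interval_lebesgue_integrable lborel (ereal \<eta>) (ereal (\<eta> / \<beta>'))
                                (R_integrand r \<psi>))"

end

theory Submission
  imports Defs
begin

lemma R_op_alt:
  fixes r :: nat and b :: real and \<psi> :: "real \<Rightarrow> complex" and \<eta> :: real
  assumes b: "0 < b" and eta: "\<eta> \<noteq> 0"
  defines "p \<equiv> (real r - 1) / real r"
  defines "G \<equiv> (\<lambda>x. exp (- \<i> * complex_of_real (x\<^sup>2)) * complex_of_real (\<bar>x\<bar> powr p) * \<psi> x)"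
  shows "R_op r b \<psi> \<eta> = exp (\<i> * complex_of_real (\<eta>\<^sup>2)) / complex_of_real (\<bar>\<eta>\<bar> powr p)
     * (G (\<eta> / b) + 2 * \<i> * complex_of_real (sgn \<eta>) *
        interval_lebesgue_integral lborel (ereal \<eta>) (ereal (\<eta> / b)) (R_integrand r \<psi>))"
proof -
  have e1: "exp (\<i> * complex_of_real ((1 - 1 / b\<^sup>2) * \<eta>\<^sup>2)) =
      exp (\<i> * complex_of_real (\<eta>\<^sup>2)) * exp (- \<i> * complex_of_real ((\<eta>/b)\<^sup>2))"
    by (simp add: exp_add[symmetric] power_divide algebra_simps)
  have pw: "\<bar>\<eta> / b\<bar> powr p = \<bar>\<eta>\<bar> powr p / b powr p"
    using b by (simp add: powr_divide)
  have pos: "\<bar>\<eta>\<bar> powr p \<noteq> 0" using eta by simp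
  show ?thesis
    unfolding R_op_def G_def p_def[symmetric] e1 pw
    using pos b by (simp add: field_simps)
qed

theorem lemma5p1:
  fixes r :: nat and \<beta> :: real and \<psi> :: "real \<Rightarrow> complex"
  assumes "r \<ge> 1"
    and "\<beta> \<in> {0<..<1}"
    and "\<psi> \<in> borel_measurable lborel"
    and "R_abs_conv r \<psi>"
    and "R_op r \<beta> \<psi> = \<psi>"
  shows "\<forall>n::nat. n \<ge> 1 \<longrightarrow> R_op r (\<beta> ^ n) \<psi> = \<psi>"
proof (intro allI impI)
  fix n :: nat assume n: "n \<ge> 1"
  define p where "p = (real r - 1) / real r"
  define G where "G = (\<lambda>x. exp (- \<i> * complex_of_real (x\<^sup>2)) * complex_of_real (\<bar>x\<bar> powr p) * \<psi> x)"
  define I where "I = (\<lambda>a b. interval_lebesgue_integral lborel (ereal a) (ereal b) (R_integrand r \<psi>))"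
  have b0: "0 < \<beta>" and b1: "\<beta> < 1" using assms(2) by auto
  have integ: "\<And>b' \<eta>. b' \<in> {0<..<1} \<Longrightarrow> interval_lebesgue_integrable lborel (ereal \<eta>) (ereal (\<eta> / b')) (R_integrand r \<psi>)"
    using assms(4) unfolding R_abs_conv_def by blast
  have bn: "\<And>k. k \<ge> 1 \<Longrightarrow> \<beta> ^ k \<in> {0<..<1}"
    using b0 b1 by (auto simp: power_less_one_iff)
  have alt: "\<And>b' \<eta>. 0 < b' \<Longrightarrow> \<eta> \<noteq> 0 \<Longrightarrow> R_op r b' \<psi> \<eta> = exp (\<i> * complex_of_real (\<eta>\<^sup>2)) / complex_of_real (\<bar>\<eta>\<bar> powr p)
     * (G (\<eta> / b') + 2 * \<i> * complex_of_real (sgn \<eta>) * I \<eta> (\<eta> / b'))"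
    unfolding p_def G_def I_def by (rule R_op_alt)
  have Gpsi: "\<And>\<eta>. \<eta> \<noteq> 0 \<Longrightarrow> \<psi> \<eta> = exp (\<i> * complex_of_real (\<eta>\<^sup>2)) / complex_of_real (\<bar>\<eta>\<bar> powr p) * G \<eta>"
  proof -
    fix \<eta> :: real assume "\<eta> \<noteq> 0"
    then have "\<bar>\<eta>\<bar> powr p \<noteq> 0" by simp
    moreover have "exp (\<i> * complex_of_real (\<eta>\<^sup>2)) * exp (- \<i> * complex_of_real (\<eta>\<^sup>2)) = 1"
      by (simp add: exp_add[symmetric])
    ultimately show "\<psi> \<eta> = exp (\<i> * complex_of_real (\<eta>\<^sup>2)) / complex_of_real (\<bar>\<eta>\<bar> powr p) * G \<eta>"
      unfolding G_def by (simp add: field_simps)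
  qed
  have step: "\<And>x. x \<noteq> 0 \<Longrightarrow> G x = G (x / \<beta>) + 2 * \<i> * complex_of_real (sgn x) * I x (x / \<beta>)"
  proof -
    fix x :: real assume x: "x \<noteq> 0"
    have "\<psi> x = R_op r \<beta> \<psi> x" using assms(5) by simp
    then have "exp (\<i> * complex_of_real (x\<^sup>2)) / complex_of_real (\<bar>x\<bar> powr p) * G x =
       exp (\<i> * complex_of_real (x\<^sup>2)) / complex_of_real (\<bar>x\<bar> powr p) * (G (x / \<beta>) + 2 * \<i> * complex_of_real (sgn x) * I x (x / \<beta>))"
      using Gpsi[OF x] alt[OF b0 x] by simp
    moreover have "exp (\<i> * complex_of_real (x\<^sup>2)) / complex_of_real (\<bar>x\<bar> powr p) \<noteq> 0"
      using x by simp
    ultimately show "G x = G (x / \<beta>) + 2 * \<i> * complex_of_real (sgn x) * I x (x / \<beta>)"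
      by simp
  qed
  have tele: "\<And>\<eta>. \<eta> \<noteq> 0 \<Longrightarrow> G \<eta> = G (\<eta> / \<beta> ^ k) + 2 * \<i> * complex_of_real (sgn \<eta>) * I \<eta> (\<eta> / \<beta> ^ k)" for k
  proof (induction k)
    case 0
    then show ?case by (simp add: I_def)
  next
    case (Suc k)
    have nz: "\<eta> / \<beta> ^ k \<noteq> 0" using Suc.prems b0 by simp
    have sg: "sgn (\<eta> / \<beta> ^ k) = sgn \<eta>" using b0 by (simp add: sgn_mult sgn_divide)
    have eq: "\<eta> / \<beta> ^ k / \<beta> = \<eta> / \<beta> ^ Suc k" by (simp add: field_simps)
    have intS: "interval_lebesgue_integrable lborel (ereal \<eta>) (ereal (\<eta> / \<beta> ^ Suc k)) (R_integrand r \<psi>)"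
      using integ[OF bn[of "Suc k"]] by simp
    have mono: "\<eta> / \<beta> ^ k \<le> \<eta> / \<beta> ^ Suc k \<and> \<eta> \<le> \<eta> / \<beta> ^ k \<or> \<eta> / \<beta> ^ k \<ge> \<eta> / \<beta> ^ Suc k \<and> \<eta> \<ge> \<eta> / \<beta> ^ k"
    proof (cases "\<eta> > 0")
      case True
      have a: "\<beta> ^ Suc k \<le> \<beta> ^ k" using b0 b1 by (simp add: power_decreasing)
      have c: "\<beta> ^ k \<le> 1" using b0 b1 by (simp add: power_le_one)
      have "\<eta> / \<beta> ^ k \<le> \<eta> / \<beta> ^ Suc k" using True a b0 by (intro divide_left_mono) auto
      moreover have "\<eta> \<le> \<eta> / \<beta> ^ k" using True c b0 by (simp add: le_divide_eq)
      ultimately show ?thesis by blast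
    next
      case False
      then have neg: "\<eta> < 0" using Suc.prems by simp
      have a: "\<beta> ^ Suc k \<le> \<beta> ^ k" using b0 b1 by (simp add: power_decreasing)
      have c: "\<beta> ^ k \<le> 1" using b0 b1 by (simp add: power_le_one)
      have "(-\<eta>) / \<beta> ^ k \<le> (-\<eta>) / \<beta> ^ Suc k" using neg a b0 by (intro divide_left_mono) auto
      moreover have "-\<eta> \<le> (-\<eta>) / \<beta> ^ k"
      proof -
        have bp: "0 < \<beta> ^ k" using b0 by simp
        have "(-\<eta>) * \<beta> ^ k \<le> (-\<eta>) * 1" using neg c by (intro mult_left_mono) auto
        then show ?thesis using bp by (simp add: divide_le_eq)
      qed
      ultimately show ?thesis by auto
    qed
    have intM: "interval_lebesgue_integrable lborel
        (min (ereal \<eta>) (min (ereal (\<eta> / \<beta> ^ k)) (ereal (\<eta> / \<beta> ^ Suc k))))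
        (max (ereal \<eta>) (max (ereal (\<eta> / \<beta> ^ k)) (ereal (\<eta> / \<beta> ^ Suc k)))) (R_integrand r \<psi>)"
      using mono
    proof
      assume h: "\<eta> / \<beta> ^ k \<le> \<eta> / \<beta> ^ Suc k \<and> \<eta> \<le> \<eta> / \<beta> ^ k"
      then have "min (ereal \<eta>) (min (ereal (\<eta> / \<beta> ^ k)) (ereal (\<eta> / \<beta> ^ Suc k))) = ereal \<eta>"
        "max (ereal \<eta>) (max (ereal (\<eta> / \<beta> ^ k)) (ereal (\<eta> / \<beta> ^ Suc k))) = ereal (\<eta> / \<beta> ^ Suc k)"
        by auto
      then show ?thesis using intS by simp
    next
      assume h: "\<eta> / \<beta> ^ k \<ge> \<eta> / \<beta> ^ Suc k \<and> \<eta> \<ge> \<eta> / \<beta> ^ k"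
      then have "min (ereal \<eta>) (min (ereal (\<eta> / \<beta> ^ k)) (ereal (\<eta> / \<beta> ^ Suc k))) = ereal (\<eta> / \<beta> ^ Suc k)"
        "max (ereal \<eta>) (max (ereal (\<eta> / \<beta> ^ k)) (ereal (\<eta> / \<beta> ^ Suc k))) = ereal \<eta>"
        by auto
      then show ?thesis using intS interval_integrable_endpoints_reverse by metis
    qed
    have sum: "I \<eta> (\<eta> / \<beta> ^ k) + I (\<eta> / \<beta> ^ k) (\<eta> / \<beta> ^ Suc k) = I \<eta> (\<eta> / \<beta> ^ Suc k)"
      unfolding I_def by (rule interval_integral_sum[OF intM])
    have "G \<eta> = G (\<eta> / \<beta> ^ k) + 2 * \<i> * complex_of_real (sgn \<eta>) * I \<eta> (\<eta> / \<beta> ^ k)"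
      using Suc.IH Suc.prems by simp
    also have "G (\<eta> / \<beta> ^ k) = G (\<eta> / \<beta> ^ Suc k) + 2 * \<i> * complex_of_real (sgn \<eta>) * I (\<eta> / \<beta> ^ k) (\<eta> / \<beta> ^ Suc k)"
      using step[OF nz] unfolding sg eq .
    finally show ?case using sum[symmetric] by (simp add: algebra_simps)
  qed
  show "R_op r (\<beta> ^ n) \<psi> = \<psi>"
  proof
    fix \<eta> :: real
    show "R_op r (\<beta> ^ n) \<psi> \<eta> = \<psi> \<eta>"
    proof (cases "\<eta> = 0")
      case False
      have "0 < \<beta> ^ n" using b0 by simp
      then show ?thesis using alt[OF _ False] tele[OF False, of n] Gpsi[OF False] by simp
    next
      case True
      have z: "R_op r b' \<psi> 0 = \<psi> 0 / complex_of_real (b' powr p)" for b'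
        unfolding R_op_def p_def by simp
      have f: "\<psi> 0 = \<psi> 0 / complex_of_real (\<beta> powr p)"
        using z[of \<beta>] assms(5) by (metis)
      have "\<psi> 0 = 0 \<or> \<beta> powr p = 1"
      proof (cases "\<psi> 0 = 0")
        case False
        from f have "\<psi> 0 * complex_of_real (\<beta> powr p) = \<psi> 0" using b0
          by (metis divide_eq_eq of_real_eq_0_iff powr_eq_0_iff less_irrefl)
        then show ?thesis using False by (simp add: of_real_eq_1_iff)
      qed simp
      then show ?thesis
      proof
        assume "\<psi> 0 = 0" then show ?thesis using True z by simp
      next
        assume h: "\<beta> powr p = 1"
        have "(\<beta> ^ n) powr p = (\<beta> powr p) ^ n" using b0 by (simp add: powr_power powr_realpow[symmetric] powr_powr mult.commute)
        then show ?thesis using True z h by simp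
      qed
    qed
  qed
qed

end
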